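(* Let $(\mathfrak{h},\langle\cdot,\cdot\rangle)$ be a Kundt pair on the Heisenberg Lie algebra $\mathfrak{n}$. Then it is equivalent to $(\mathfrak{h}_0,\langle\cdot,\cdot\rangle_0)$ where either (1) the matrix of $\langle\cdot,\cdot\rangle_0$ in the basis $(X_1,X_2,X_3)$ is $\begin{pmatrix}1&0&0\\0&-1&0\\0&0&\mu\end{pmatrix}$ with $\mu>0$, and $\mathfrak{h}_0=\mathrm{span}\{X_1+X_2,X_3\}$ or $\mathfrak{h}_0=\mathrm{span}\{X_1-X_2,X_3\}$; or (2) the matrix of $\langle\cdot,\cdot\rangle_0$ in the basis $(X_1,X_2,X_3)$ is $\begin{pmatrix}1&0&0\\0&0&1\\0&1&0\end{pmatrix}$ and $\mathfrak{h}_0=\mathrm{span}\{X_1,X_3\}$.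
   Context: $\mathfrak{n}$ has basis $(X_1,X_2,X_3)$ with only nonzero bracket $[X_1,X_2]=X_3$. For a Lorentzian scalar product $\langle\cdot,\cdot\rangle$ on a Lie algebra $\mathfrak{g}$, the Levi-Civita product is defined by $2\langle u\bullet v,w\rangle=\langle[u,v],w\rangle+\langle[w,u],v\rangle+\langle[w,v],u\rangle$. A Kundt pair on $\mathfrak{g}$ is a pair consisting of a Lorentzian scalar product $\langle\cdot,\cdot\rangle$ and a codimension one subalgebra $\mathfrak{h}$ which is $\langle\cdot,\cdot\rangle$-degenerate, stable by $\bullet$, and such that $e\bullet e=0$ for all $e\in\mathfrak{h}^\perp$. Two Kundt pairs $(\mathfrak{h}_1,\langle\cdot,\cdot\rangle_1)$, $(\mathfrak{h}_2,\langle\cdot,\cdot\rangle_2)$ are equivalent if there is a Lie algebra automorphism $\phi$ of $\mathfrak{g}$ with $\phi(\mathfrak{h}_1)=\mathfrak{h}_2$ and $\phi^*\langle\cdot,\cdot\rangle_2=\langle\cdot,\cdot\rangle_1$. *)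

theory Defs
  imports "HOL-Analysis.Analysis"
begin

definition sym_bilinear :: "('a::real_vector \<Rightarrow> 'a \<Rightarrow> real) \<Rightarrow> bool" where
  "sym_bilinear g \<longleftrightarrow> bilinear g \<and> (\<forall>u v. g u v = g v u)"

definition lorentzian :: "('a::euclidean_space \<Rightarrow> 'a \<Rightarrow> real) \<Rightarrow> bool" where
  "lorentzian g \<longleftrightarrow> sym_bilinear g \<and>
     (\<exists>B t. independent B \<and> span B = UNIV \<and> t \<in> B \<and> g t t = -1 \<and>
        (\<forall>b\<in>B - {t}. g b b = 1) \<and>
        (\<forall>b\<in>B. \<forall>c\<in>B. b \<noteq> c \<longrightarrow> g b c = 0))"

definition lc_prod :: "('a \<Rightarrow> 'a \<Rightarrow> 'a) \<Rightarrow> ('a \<Rightarrow> 'a \<Rightarrow> real) \<Rightarrow> 'a \<Rightarrow> 'a \<Rightarrow> 'a" where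
  "lc_prod br g u v = (THE x. \<forall>w. 2 * g x w = g (br u v) w + g (br w u) v + g (br w v) u)"

definition orth_compl :: "('a \<Rightarrow> 'a \<Rightarrow> real) \<Rightarrow> 'a set \<Rightarrow> 'a set" where
  "orth_compl g H = {e. \<forall>u\<in>H. g e u = 0}"

definition codim1_subalgebra :: "('a::euclidean_space \<Rightarrow> 'a \<Rightarrow> 'a) \<Rightarrow> 'a set \<Rightarrow> bool" where
  "codim1_subalgebra br H \<longleftrightarrow> subspace H \<and> dim H + 1 = DIM('a) \<and>
     (\<forall>u\<in>H. \<forall>v\<in>H. br u v \<in> H)"

definition degenerate_on :: "('a::real_vector \<Rightarrow> 'a \<Rightarrow> real) \<Rightarrow> 'a set \<Rightarrow> bool" where
  "degenerate_on g H \<longleftrightarrow> (\<exists>u\<in>H. u \<noteq> 0 \<and> (\<forall>w\<in>H. g u w = 0))"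

definition kundt_pair :: "('a::euclidean_space \<Rightarrow> 'a \<Rightarrow> 'a) \<Rightarrow> 'a set \<Rightarrow> ('a \<Rightarrow> 'a \<Rightarrow> real) \<Rightarrow> bool" where
  "kundt_pair br H g \<longleftrightarrow> lorentzian g \<and> codim1_subalgebra br H \<and> degenerate_on g H \<and>
     (\<forall>u\<in>H. \<forall>v\<in>H. lc_prod br g u v \<in> H) \<and>
     (\<forall>e\<in>orth_compl g H. lc_prod br g e e = 0)"

definition lie_automorphism :: "('a::real_vector \<Rightarrow> 'a \<Rightarrow> 'a) \<Rightarrow> ('a \<Rightarrow> 'a) \<Rightarrow> bool" where
  "lie_automorphism br \<phi> \<longleftrightarrow> linear \<phi> \<and> bij \<phi> \<and> (\<forall>u v. \<phi> (br u v) = br (\<phi> u) (\<phi> v))"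

definition kundt_equivalent ::
  "('a::euclidean_space \<Rightarrow> 'a \<Rightarrow> 'a) \<Rightarrow> 'a set \<Rightarrow> ('a \<Rightarrow> 'a \<Rightarrow> real) \<Rightarrow> 'a set \<Rightarrow> ('a \<Rightarrow> 'a \<Rightarrow> real) \<Rightarrow> bool" where
  "kundt_equivalent br H1 g1 H2 g2 \<longleftrightarrow>
     (\<exists>\<phi>. lie_automorphism br \<phi> \<and> \<phi> ` H1 = H2 \<and> (\<forall>u v. g2 (\<phi> u) (\<phi> v) = g1 u v))"

definition X1 :: "real^3" where "X1 = axis 1 1"
definition X2 :: "real^3" where "X2 = axis 2 1"
definition X3 :: "real^3" where "X3 = axis 3 1"

definition heis_br :: "real^3 \<Rightarrow> real^3 \<Rightarrow> real^3" where
  "heis_br u v = (u$1 * v$2 - u$2 * v$1) *\<^sub>R X3"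

definition form1 :: "real \<Rightarrow> real^3 \<Rightarrow> real^3 \<Rightarrow> real" where
  "form1 \<mu> u v = u$1 * v$1 - u$2 * v$2 + \<mu> * u$3 * v$3"

definition form2 :: "real^3 \<Rightarrow> real^3 \<Rightarrow> real" where
  "form2 u v = u$1 * v$1 + u$2 * v$3 + u$3 * v$2"

end

theory Submission
  imports Defs
begin


lemma lor_basis:
  fixes g :: "real^3 \<Rightarrow> real^3 \<Rightarrow> real"
  assumes "lorentzian g"
  shows "\<exists>t b1 b2. g t t = -1 \<and> g b1 b1 = 1 \<and> g b2 b2 = 1 \<and> g t b1 = 0 \<and> g t b2 = 0 \<and> g b1 b2 = 0
     \<and> (\<forall>x. \<exists>x0 x1 x2. x = x0 *\<^sub>R t + x1 *\<^sub>R b1 + x2 *\<^sub>R b2)"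
proof -
  obtain B t where ind: "independent B" and sp: "span B = UNIV" and tB: "t \<in> B" and tt: "g t t = -1"
    and one: "\<forall>b\<in>B - {t}. g b b = 1" and orth: "\<forall>b\<in>B. \<forall>c\<in>B. b \<noteq> c \<longrightarrow> g b c = 0"
    using assms unfolding lorentzian_def by blast
  have fin: "finite B" using independent_bound[OF ind] by blast
  have "card B = dim (UNIV :: (real^3) set)"
    by (rule basis_card_eq_dim) (use ind sp in auto)
  then have cB: "card B = 3" by simp
  then have "card (B - {t}) = 2" using tB fin by simp
  then obtain b1 b2 where B2: "B - {t} = {b1, b2}" and ne: "b1 \<noteq> b2" by (auto simp: card_2_iff)
  have BB: "B = {t, b1, b2}" using B2 tB by auto
  have tn: "t \<noteq> b1" "t \<noteq> b2" using B2 by auto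
  show ?thesis
  proof (intro exI conjI)
    show "g t t = -1" by fact
    show "g b1 b1 = 1" "g b2 b2 = 1" using one B2 by auto
    show "g t b1 = 0" "g t b2 = 0" "g b1 b2 = 0" using orth BB tn ne by auto
    show "\<forall>x. \<exists>x0 x1 x2. x = x0 *\<^sub>R t + x1 *\<^sub>R b1 + x2 *\<^sub>R b2"
    proof
    fix x :: "real^3"
    have "x \<in> span B" using sp by simp
    then obtain u where "x = (\<Sum>v\<in>B. u v *\<^sub>R v)" using span_finite[OF fin] by auto
    then have "x = u t *\<^sub>R t + u b1 *\<^sub>R b1 + u b2 *\<^sub>R b2"
      using BB tn ne by (simp add: add.assoc)
    then show "\<exists>x0 x1 x2. x = x0 *\<^sub>R t + x1 *\<^sub>R b1 + x2 *\<^sub>R b2" by blast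
  qed
  qed
qed

lemma lor_props:
  fixes g :: "real^3 \<Rightarrow> real^3 \<Rightarrow> real"
  assumes L: "lorentzian g"
  shows "(\<forall>x. (\<forall>w. g x w = 0) \<longrightarrow> x = 0) \<and>
    (\<forall>x y. g x x \<le> 0 \<longrightarrow> g y y \<le> 0 \<longrightarrow> g x y = 0 \<longrightarrow>
        (\<exists>s t. (s \<noteq> 0 \<or> t \<noteq> 0) \<and> s *\<^sub>R x + t *\<^sub>R y = 0))"
proof -
  have bl: "bilinear g" and sy: "\<And>u v. g u v = g v u" using L unfolding lorentzian_def sym_bilinear_def by auto
  obtain t b1 b2 where tt: "g t t = -1" and b11: "g b1 b1 = 1" and b22: "g b2 b2 = 1"
    and tb1: "g t b1 = 0" and tb2: "g t b2 = 0" and b12: "g b1 b2 = 0"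
    and cov: "\<forall>x. \<exists>x0 x1 x2. x = x0 *\<^sub>R t + x1 *\<^sub>R b1 + x2 *\<^sub>R b2"
    using lor_basis[OF L] by blast
  have b1t: "g b1 t = 0" and b2t: "g b2 t = 0" and b21: "g b2 b1 = 0" using tb1 tb2 b12 sy by metis+
  have gf: "g (a0 *\<^sub>R t + a1 *\<^sub>R b1 + a2 *\<^sub>R b2) (c0 *\<^sub>R t + c1 *\<^sub>R b1 + c2 *\<^sub>R b2)
      = - a0 * c0 + a1 * c1 + a2 * c2" for a0 a1 a2 c0 c1 c2
    by (simp add: bilinear_ladd[OF bl] bilinear_radd[OF bl] bilinear_lmul[OF bl] bilinear_rmul[OF bl]
        tt b11 b22 tb1 tb2 b12 b1t b2t b21)
  have ND: "x = 0" if h: "\<forall>w. g x w = 0" for x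
  proof -
    obtain x0 x1 x2 where xe: "x = x0 *\<^sub>R t + x1 *\<^sub>R b1 + x2 *\<^sub>R b2" using cov by blast
    have "g x (1 *\<^sub>R t + 0 *\<^sub>R b1 + 0 *\<^sub>R b2) = 0" "g x (0 *\<^sub>R t + 1 *\<^sub>R b1 + 0 *\<^sub>R b2) = 0"
      "g x (0 *\<^sub>R t + 0 *\<^sub>R b1 + 1 *\<^sub>R b2) = 0" using h by auto
    then have "x0 = 0" "x1 = 0" "x2 = 0" unfolding xe gf by simp_all
    then show ?thesis using xe by simp
  qed
  have SG: "\<exists>s t. (s \<noteq> 0 \<or> t \<noteq> 0) \<and> s *\<^sub>R x + t *\<^sub>R y = 0"
    if hx: "g x x \<le> 0" and hy: "g y y \<le> 0" and hxy: "g x y = 0" for x y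
  proof -
    obtain x0 x1 x2 where xe: "x = x0 *\<^sub>R t + x1 *\<^sub>R b1 + x2 *\<^sub>R b2" using cov by blast
    obtain y0 y1 y2 where ye: "y = y0 *\<^sub>R t + y1 *\<^sub>R b1 + y2 *\<^sub>R b2" using cov by blast
    have X: "- x0 * x0 + x1 * x1 + x2 * x2 \<le> 0" using hx unfolding xe gf .
    have Y: "- y0 * y0 + y1 * y1 + y2 * y2 \<le> 0" using hy unfolding ye gf .
    have XY: "- x0 * y0 + x1 * y1 + x2 * y2 = 0" using hxy unfolding xe ye gf .
    show ?thesis
    proof (cases "x0 = 0")
      case True
      then have "x1 * x1 + x2 * x2 \<le> 0" using X by simp
      then have "x1 = 0" "x2 = 0" by (smt (verit) zero_le_square mult_eq_0_iff)+
      then have "x = 0" using xe True by simp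
      then show ?thesis by (rule_tac x=1 in exI, rule_tac x=0 in exI) simp
    next
      case False
      have "(y0*x1 - x0*y1)^2 + (y0*x2 - x0*y2)^2 =
         y0^2 * (- x0 * x0 + x1 * x1 + x2 * x2) - 2*x0*y0*(- x0 * y0 + x1 * y1 + x2 * y2)
          + x0^2 * (- y0 * y0 + y1 * y1 + y2 * y2)" by (simp add: algebra_simps power2_eq_square)
      also have "\<dots> \<le> 0" using X Y XY
        by (simp add: mult_nonneg_nonpos add_nonpos_nonpos)
      finally have "(y0*x1 - x0*y1)^2 + (y0*x2 - x0*y2)^2 \<le> 0" .
      then have "y0*x1 - x0*y1 = 0" "y0*x2 - x0*y2 = 0"
        by (smt (verit) zero_le_power2 power_zero_numeral zero_less_power2)+
      then have "y0 *\<^sub>R x + (- x0) *\<^sub>R y = 0" unfolding xe ye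
        by (simp add: algebra_simps)
      then show ?thesis using False by (rule_tac x=y0 in exI, rule_tac x="-x0" in exI) simp
    qed
  qed
  show ?thesis using ND SG by blast
qed

definition psi :: "real^3 \<Rightarrow> real^3 \<Rightarrow> real^3 \<Rightarrow> real^3" where
  "psi p q x = x$1 *\<^sub>R p + x$2 *\<^sub>R q + x$3 *\<^sub>R heis_br p q"

lemma br_comp[simp]: "heis_br u v $ 1 = 0" "heis_br u v $ 2 = 0" "heis_br u v $ 3 = u$1 * v$2 - u$2 * v$1"
  by (simp_all add: heis_br_def X3_def axis_def)

lemma psi_aut:
  assumes c: "p$1*q$2 - p$2*q$1 \<noteq> 0"
  shows "lie_automorphism heis_br (psi p q)"
proof -
  have lin: "linear (psi p q)"
    by (rule linearI) (simp_all add: psi_def algebra_simps)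
  have inj: "inj (psi p q)"
  proof (rule linear_injective_0[OF lin, THEN iffD2], intro allI impI)
    fix x :: "real^3" assume h: "psi p q x = 0"
    have e1: "x$1 * p$1 + x$2 * q$1 = 0" and e2: "x$1 * p$2 + x$2 * q$2 = 0"
      and e3: "x$1 * p$3 + x$2 * q$3 + x$3 * (p$1*q$2 - p$2*q$1) = 0"
      using arg_cong[OF h, of "\<lambda>v. v$1"] arg_cong[OF h, of "\<lambda>v. v$2"] arg_cong[OF h, of "\<lambda>v. v$3"]
      by (simp_all add: psi_def)
    have "x$1 * (p$1*q$2 - p$2*q$1) = q$2 * (x$1 * p$1 + x$2 * q$1) - q$1 * (x$1 * p$2 + x$2 * q$2)"
      by (simp add: algebra_simps)
    then have "x$1 * (p$1*q$2 - p$2*q$1) = 0" using e1 e2 by simp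
    then have x1: "x$1 = 0" using c by simp
    have "x$2 * (p$1*q$2 - p$2*q$1) = p$1 * (x$1 * p$2 + x$2 * q$2) - p$2 * (x$1 * p$1 + x$2 * q$1)"
      by (simp add: algebra_simps)
    then have "x$2 * (p$1*q$2 - p$2*q$1) = 0" using e1 e2 by simp
    then have x2: "x$2 = 0" using c by simp
    have x3: "x$3 = 0" using e3 x1 x2 c by simp
    show "x = 0" using x1 x2 x3 by (simp add: vec_eq_iff forall_3)
  qed
  have surj: "surj (psi p q)" by (rule linear_injective_imp_surjective[OF lin inj]) simp
  have br: "psi p q (heis_br u v) = heis_br (psi p q u) (psi p q v)" for u v
    by (simp add: vec_eq_iff forall_3 psi_def algebra_simps)
  show ?thesis unfolding lie_automorphism_def using lin inj surj br by (auto intro: bijI)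
qed

lemma equiv_from_psi:
  assumes A: "lie_automorphism heis_br \<psi>"
    and HH: "\<forall>x. \<psi> x \<in> H \<longleftrightarrow> x \<in> H0"
    and GG: "\<forall>x y. g (\<psi> x) (\<psi> y) = g0 x y"
  shows "kundt_equivalent heis_br H g H0 g0"
proof -
  have lin: "linear \<psi>" and b: "bij \<psi>" and br: "\<And>u v. \<psi> (heis_br u v) = heis_br (\<psi> u) (\<psi> v)"
    using A unfolding lie_automorphism_def by auto
  have inj: "inj \<psi>" and surj: "surj \<psi>" using b unfolding bij_def by auto
  define \<phi> where "\<phi> = inv \<psi>"
  have ff: "\<psi> (\<phi> y) = y" for y unfolding \<phi>_def by (simp add: surj surj_f_inv_f)
  have gf: "\<phi> (\<psi> y) = y" for y unfolding \<phi>_def by (simp add: inj)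
  have "lie_automorphism heis_br \<phi>"
    unfolding lie_automorphism_def
  proof (intro conjI allI)
    show "linear \<phi>" unfolding \<phi>_def by (rule inj_linear_imp_inv_linear[OF lin inj])
    show "bij \<phi>" unfolding \<phi>_def by (rule bij_imp_bij_inv[OF b])
    fix u v
    show "\<phi> (heis_br u v) = heis_br (\<phi> u) (\<phi> v)"
      by (metis br ff gf)
  qed
  moreover have "\<phi> ` H = H0"
  proof
    show "\<phi> ` H \<subseteq> H0" using HH ff by auto
    show "H0 \<subseteq> \<phi> ` H"
    proof
      fix x assume "x \<in> H0"
      then have "\<psi> x \<in> H" using HH by auto
      then show "x \<in> \<phi> ` H" using gf by (metis image_eqI)
    qed
  qed
  moreover have "\<forall>u v. g0 (\<phi> u) (\<phi> v) = g u v" using GG ff by metis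
  ultimately show ?thesis unfolding kundt_equivalent_def by blast
qed



lemma X_comp[simp]: "X1$1 = 1" "X1$2 = 0" "X1$3 = 0" "X2$1 = 0" "X2$2 = 1" "X2$3 = 0"
  "X3$1 = 0" "X3$2 = 0" "X3$3 = 1"
  by (simp_all add: X1_def X2_def X3_def axis_def)

lemma psi_comp[simp]: "psi p q x $ 1 = x$1 * p$1 + x$2 * q$1" "psi p q x $ 2 = x$1 * p$2 + x$2 * q$2"
  by (simp_all add: psi_def)

lemma br_eq: "heis_br p q = (p$1*q$2 - p$2*q$1) *\<^sub>R X3" by (simp add: heis_br_def)

lemma psi_form:
  assumes bl: "bilinear g"
  shows "g (psi p q x) (psi p q y) =
    x$1*y$1*g p p + x$1*y$2*g p q + x$1*y$3*g p (heis_br p q)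
  + x$2*y$1*g q p + x$2*y$2*g q q + x$2*y$3*g q (heis_br p q)
  + x$3*y$1*g (heis_br p q) p + x$3*y$2*g (heis_br p q) q + x$3*y$3*g (heis_br p q) (heis_br p q)"
  unfolding psi_def
  by (simp add: bilinear_ladd[OF bl] bilinear_radd[OF bl] bilinear_lmul[OF bl] bilinear_rmul[OF bl] algebra_simps)

lemma span13: "span {X1, X3} = {x. x$2 = 0}"
proof
  show "span {X1, X3} \<subseteq> {x. x$2 = 0}"
    by (rule span_minimal) (auto simp: subspace_def)
  show "{x. x$2 = 0} \<subseteq> span {X1, X3}"
  proof
    fix x :: "real^3" assume "x \<in> {x. x$2 = 0}"
    then have "x = x$1 *\<^sub>R X1 + x$3 *\<^sub>R X3" by (simp add: vec_eq_iff forall_3)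
    also have "\<dots> \<in> span {X1, X3}" by (intro span_add span_mul span_base) auto
    finally show "x \<in> span {X1, X3}" .
  qed
qed

lemma span123: "span {X1 + X2, X3} = {x. x$1 = x$2}"
proof
  show "span {X1 + X2, X3} \<subseteq> {x. x$1 = x$2}"
    by (rule span_minimal) (auto simp: subspace_def)
  show "{x. x$1 = x$2} \<subseteq> span {X1 + X2, X3}"
  proof
    fix x :: "real^3" assume "x \<in> {x. x$1 = x$2}"
    then have "x = x$1 *\<^sub>R (X1 + X2) + x$3 *\<^sub>R X3" by (simp add: vec_eq_iff forall_3)
    also have "\<dots> \<in> span {X1 + X2, X3}" by (intro span_add span_mul span_base) auto
    finally show "x \<in> span {X1 + X2, X3}" .
  qed
qed



theorem theorem5p3:
  fixes H :: "(real^3) set" and g :: "real^3 \<Rightarrow> real^3 \<Rightarrow> real"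
  assumes "kundt_pair heis_br H g"
  shows "(\<exists>\<mu>>0. kundt_equivalent heis_br H g (span {X1 + X2, X3}) (form1 \<mu>) \<or>
                 kundt_equivalent heis_br H g (span {X1 - X2, X3}) (form1 \<mu>)) \<or>
         kundt_equivalent heis_br H g (span {X1, X3}) form2"
proof -
  have L: "lorentzian g" and cs: "codim1_subalgebra heis_br H" and dg: "degenerate_on g H"
    using assms unfolding kundt_pair_def by auto
  have bl: "bilinear g" and sy: "\<And>u v. g u v = g v u"
    using L unfolding lorentzian_def sym_bilinear_def by auto
  note gs = bilinear_ladd[OF bl] bilinear_radd[OF bl] bilinear_lmul[OF bl] bilinear_rmul[OF bl]
    bilinear_lsub[OF bl] bilinear_rsub[OF bl]
  have ND: "\<And>x. \<forall>w. g x w = 0 \<Longrightarrow> x = 0"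
    and SG: "\<And>x y. g x x \<le> 0 \<Longrightarrow> g y y \<le> 0 \<Longrightarrow> g x y = 0 \<Longrightarrow>
        \<exists>s t. (s \<noteq> 0 \<or> t \<noteq> 0) \<and> s *\<^sub>R x + t *\<^sub>R y = 0"
    using lor_props[OF L] by blast+
  have sH: "subspace H" and dH: "dim H = 2" and clH: "\<And>u v. u \<in> H \<Longrightarrow> v \<in> H \<Longrightarrow> heis_br u v \<in> H"
    using cs unfolding codim1_subalgebra_def by auto
  obtain n :: "real^3" where n0: "n \<noteq> 0" and Hsub: "span H \<subseteq> {x. n \<bullet> x = 0}"
    using lowdim_subset_hyperplane[of H] dH by auto
  have Heq: "H = {x. n \<bullet> x = 0}"
  proof (rule subspace_dim_equal[OF sH])
    show "subspace {x. n \<bullet> x = 0}" by (rule subspace_hyperplane)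
    show "H \<subseteq> {x. n \<bullet> x = 0}" using Hsub span_superset by blast
    show "dim {x. n \<bullet> x = 0} \<le> dim H" using dim_hyperplane[OF n0] dH by simp
  qed
  have inn: "n \<bullet> x = n$1*x$1 + n$2*x$2 + n$3*x$3" for x by (simp add: inner_vec_def sum_3)
  have n3: "n$3 = 0"
  proof (rule ccontr)
    assume h: "n$3 \<noteq> 0"
    define u :: "real^3" where "u = vector [n$3, 0, -n$1]"
    define v :: "real^3" where "v = vector [0, n$3, -n$2]"
    have "u \<in> H" "v \<in> H" unfolding Heq inn u_def v_def by (simp_all add: algebra_simps)
    then have "heis_br u v \<in> H" by (rule clH)
    then have "n$3 * (n$3 * n$3) = 0" unfolding Heq inn u_def v_def by simp
    then show False using h by simp
  qed
  have Hc: "x \<in> H \<longleftrightarrow> n$1*x$1 + n$2*x$2 = 0" for x unfolding Heq inn n3 by simp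
  define N where "N = n$1*n$1 + n$2*n$2"
  have Npos: "N > 0"
  proof -
    have "n$1 \<noteq> 0 \<or> n$2 \<noteq> 0" using n0 n3 by (auto simp: vec_eq_iff forall_3)
    then show ?thesis unfolding N_def by (smt (verit) zero_le_square not_real_square_gt_zero)
  qed
  define z where "z = X3"
  define a :: "real^3" where "a = vector [- n$2, n$1, 0]"
  define b :: "real^3" where "b = vector [n$1, n$2, 0]"
  have zH: "z \<in> H" and aH: "a \<in> H" unfolding Hc z_def a_def by (simp_all add: algebra_simps)
  have dec: "w = ((n$1*w$1 + n$2*w$2)/N) *\<^sub>R b + ((n$1*w$2 - n$2*w$1)/N) *\<^sub>R a + (w$3) *\<^sub>R z" for w
  proof -
    have "N \<noteq> 0" using Npos by simp
    have h1: "(n$1*w$1 + n$2*w$2) * n$1 - (n$1*w$2 - n$2*w$1) * n$2 = w$1 * N"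
      unfolding N_def by (simp add: algebra_simps)
    have h2: "(n$1*w$1 + n$2*w$2) * n$2 + (n$1*w$2 - n$2*w$1) * n$1 = w$2 * N"
      unfolding N_def by (simp add: algebra_simps)
    show ?thesis unfolding a_def b_def z_def
      by (simp add: vec_eq_iff forall_3 add_divide_distrib[symmetric] diff_divide_distrib[symmetric])
         (simp add: h1 h2 \<open>N \<noteq> 0\<close>)
  qed
  have ND3: "x = 0" if "g x a = 0" "g x b = 0" "g x z = 0" for x
  proof (rule ND, rule allI)
    fix w show "g x w = 0" using that by (subst dec[of w]) (simp add: gs)
  qed
  obtain e where eH: "e \<in> H" and e0: "e \<noteq> 0" and rad: "\<And>w. w \<in> H \<Longrightarrow> g e w = 0"
    using dg unfolding degenerate_on_def by blast
  have nz: "n$1 \<noteq> 0 \<or> n$2 \<noteq> 0" using Npos unfolding N_def by auto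
  have z0: "z \<noteq> 0" unfolding z_def by (auto simp: vec_eq_iff forall_3)
  have caseA: "kundt_equivalent heis_br H g (span {X1, X3}) form2" if E: "e$1 = 0 \<and> e$2 = 0"
  proof -
    have ee: "e = (e$3) *\<^sub>R z" using E unfolding z_def by (simp add: vec_eq_iff forall_3)
    have e3: "e$3 \<noteq> 0" using e0 ee by auto
    have radz: "g z w = 0" if "w \<in> H" for w
    proof -
      have "e$3 * g z w = 0" using rad[OF that] by (subst (asm) ee) (simp add: gs)
      then show ?thesis using e3 by simp
    qed
    have zz: "g z z = 0" and za: "g z a = 0" using radz zH aH by auto
    have az: "g a z = 0" using za sy by metis
    have Apos: "g a a > 0"
    proof (rule ccontr)
      assume "\<not> g a a > 0"
      then obtain s t where st: "s \<noteq> 0 \<or> t \<noteq> 0" and c: "s *\<^sub>R a + t *\<^sub>R z = 0"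
        using SG[of a z] zz az by auto
      have "s * n$2 = 0" "s * n$1 = 0" "t = 0 \<or> s * 0 + t = 0"
        using arg_cong[OF c, of "\<lambda>v. v$1"] arg_cong[OF c, of "\<lambda>v. v$2"] arg_cong[OF c, of "\<lambda>v. v$3"]
        unfolding a_def z_def by auto
      then show False using st nz by auto
    qed
    have bz: "g b z \<noteq> 0"
    proof
      assume "g b z = 0"
      then have "g z b = 0" using sy by metis
      then have "z = 0" using ND3[of z] zz za by simp
      then show False using z0 by simp
    qed
    define A where "A = g a a"
    define lam where "lam = (if g b z < 0 then 1 else -1) / sqrt A"
    have sA: "sqrt A * sqrt A = A" "sqrt A > 0" using Apos unfolding A_def by auto
    have lam1: "lam * lam * A = 1" unfolding lam_def using sA by (auto simp: field_simps)
    have lam2: "lam * g b z < 0" unfolding lam_def using sA bz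
      by (auto simp: field_simps zero_less_mult_iff mult_less_0_iff)
    define K where "K = - lam * N * g b z"
    have Kpos: "K > 0" unfolding K_def using lam2 Npos by (simp add: mult_less_0_iff zero_less_mult_iff)
    define \<kappa> where "\<kappa> = 1 / sqrt K"
    have kap1: "\<kappa> * \<kappa> * K = 1" "\<kappa> \<noteq> 0" unfolding \<kappa>_def using Kpos by auto
    define \<alpha> where "\<alpha> = - \<kappa> * g a b / A"
    define q0 where "q0 = \<kappa> *\<^sub>R b + \<alpha> *\<^sub>R a"
    define \<beta> where "\<beta> = - g q0 q0 / (2 * \<kappa> * g b z)"
    define p where "p = lam *\<^sub>R a"
    define q where "q = q0 + \<beta> *\<^sub>R z"
    define c where "c = p$1*q$2 - p$2*q$1"
    have cval: "c = - lam * \<kappa> * N"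
      unfolding c_def p_def q_def q0_def a_def b_def z_def N_def by (simp add: algebra_simps)
    have c0: "c \<noteq> 0" using cval kap1 Npos lam1 by auto
    have r: "heis_br p q = c *\<^sub>R z" unfolding br_eq c_def z_def ..
    have q0z: "g q0 z = \<kappa> * g b z" unfolding q0_def by (simp add: gs az)
    have zq0: "g z q0 = \<kappa> * g b z" using q0z sy by metis
    have ba: "g b a = g a b" using sy by metis
    have v_pp: "g p p = 1" unfolding p_def using lam1 by (simp add: gs A_def mult.assoc)
    have v_pq: "g p q = 0" unfolding p_def q_def q0_def \<alpha>_def
      using Apos by (simp add: gs az A_def field_simps)
    have v_qq: "g q q = 0" unfolding q_def \<beta>_def
      using bz kap1 by (simp add: gs q0z zq0 zz field_simps)
    have qz: "g q z = \<kappa> * g b z" unfolding q_def by (simp add: gs q0z zz)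
    have pz: "g p z = 0" unfolding p_def by (simp add: gs az)
    have v_pr: "g p (heis_br p q) = 0" "g (heis_br p q) p = 0" unfolding r using pz sy by (simp_all add: gs)
    have v_qr: "g q (heis_br p q) = 1" "g (heis_br p q) q = 1"
    proof -
      have "g q (heis_br p q) = c * (\<kappa> * g b z)" unfolding r by (simp add: gs qz)
      also have "\<dots> = \<kappa> * \<kappa> * K" unfolding cval K_def by (simp add: algebra_simps)
      finally show "g q (heis_br p q) = 1" using kap1 by simp
      then show "g (heis_br p q) q = 1" using sy by metis
    qed
    have v_rr: "g (heis_br p q) (heis_br p q) = 0" unfolding r by (simp add: gs zz)
    have v_qp: "g q p = 0" using v_pq sy by metis
    show ?thesis
    proof (rule equiv_from_psi[OF psi_aut])
      show "p$1*q$2 - p$2*q$1 \<noteq> 0" using c0 unfolding c_def .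
      show "\<forall>x y. g (psi p q x) (psi p q y) = form2 x y"
        by (simp add: psi_form[OF bl] v_pp v_pq v_qq v_pr v_qr v_rr v_qp form2_def)
      have np: "n$1 * p$1 + n$2 * p$2 = 0" unfolding p_def a_def by (simp add: algebra_simps)
      have nq: "n$1 * q$1 + n$2 * q$2 = \<kappa> * N"
        unfolding q_def q0_def a_def b_def z_def N_def by (simp add: algebra_simps)
      show "\<forall>x. psi p q x \<in> H \<longleftrightarrow> x \<in> span {X1, X3}"
      proof
        fix x
        have "psi p q x \<in> H \<longleftrightarrow> x$1 * (n$1 * p$1 + n$2 * p$2) + x$2 * (n$1 * q$1 + n$2 * q$2) = 0"
          unfolding Hc by (simp add: algebra_simps)
        also have "\<dots> \<longleftrightarrow> x$2 = 0" unfolding np nq using kap1 Npos by simp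
        finally show "psi p q x \<in> H \<longleftrightarrow> x \<in> span {X1, X3}" unfolding span13 by simp
      qed
    qed
  qed
  have caseB: "\<exists>\<mu>>0. kundt_equivalent heis_br H g (span {X1 + X2, X3}) (form1 \<mu>)"
    if E: "\<not> (e$1 = 0 \<and> e$2 = 0)"
  proof -
    have ee: "g e e = 0" and ez: "g e z = 0" and ea: "g e a = 0" using rad eH zH aH by auto
    have ze: "g z e = 0" using ez sy by metis
    have ne: "n$1 * e$1 + n$2 * e$2 = 0" using eH Hc by simp
    have gpos: "g z z > 0"
    proof (rule ccontr)
      assume "\<not> g z z > 0"
      then obtain s t where st: "s \<noteq> 0 \<or> t \<noteq> 0" and c: "s *\<^sub>R z + t *\<^sub>R e = 0"
        using SG[of z e] ee ze by auto
      have "t * e$1 = 0" "t * e$2 = 0" "s + t * e$3 = 0"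
        using arg_cong[OF c, of "\<lambda>v. v$1"] arg_cong[OF c, of "\<lambda>v. v$2"] arg_cong[OF c, of "\<lambda>v. v$3"]
        unfolding z_def by auto
      then show False using st E by auto
    qed
    define \<gamma> where "\<gamma> = g z z"
    define w where "w = b - (g b z / \<gamma>) *\<^sub>R z"
    have wz: "g w z = 0" unfolding w_def \<gamma>_def using gpos by (simp add: gs)
    have zw: "g z w = 0" using wz sy by metis
    define \<delta> where "\<delta> = g e w"
    have d0: "\<delta> \<noteq> 0"
    proof
      assume "\<delta> = 0"
      then have "g e b = 0" unfolding \<delta>_def w_def by (simp add: gs ez)
      then have "e = 0" using ND3[of e] ea ez by simp
      then show False using e0 by simp
    qed
    define k where "k = g w w / (2 * \<delta>)"
    define f where "f = (1 / \<delta>) *\<^sub>R (w - k *\<^sub>R e)"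
    have we: "g w e = \<delta>" unfolding \<delta>_def using sy by metis
    have ff: "g f f = 0" unfolding f_def k_def using d0 by (simp add: gs ee we \<delta>_def[symmetric] field_simps)
    have ef: "g e f = 1" unfolding f_def using d0 by (simp add: gs ee \<delta>_def[symmetric] field_simps)
    have fe: "g f e = 1" using ef sy by metis
    have fz: "g f z = 0" unfolding f_def by (simp add: gs wz ez)
    define p where "p = e + (1/2) *\<^sub>R f"
    define q where "q = e - (1/2) *\<^sub>R f"
    define c where "c = p$1*q$2 - p$2*q$1"
    have cval: "c = - (e$1 * f$2 - e$2 * f$1)" unfolding c_def p_def q_def by (simp add: algebra_simps)
    have f1: "f$1 = (n$1 - k * e$1) / \<delta>" and f2: "f$2 = (n$2 - k * e$2) / \<delta>"
      unfolding f_def w_def b_def z_def by simp_all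
    have "e$1 * f$2 - e$2 * f$1 = (e$1 * n$2 - e$2 * n$1) / \<delta>"
      unfolding f1 f2 using d0 by (simp add: field_simps)
    moreover have "e$1 * n$2 - e$2 * n$1 \<noteq> 0"
    proof
      assume h: "e$1 * n$2 - e$2 * n$1 = 0"
      have "e$1 * N = n$1 * (n$1 * e$1 + n$2 * e$2) + n$2 * (e$1 * n$2 - e$2 * n$1)"
        unfolding N_def by (simp add: algebra_simps)
      then have "e$1 = 0" using h ne Npos by simp
      have "e$2 * N = n$2 * (n$1 * e$1 + n$2 * e$2) - n$1 * (e$1 * n$2 - e$2 * n$1)"
        unfolding N_def by (simp add: algebra_simps)
      then have "e$2 = 0" using h ne Npos by simp
      then show False using E \<open>e$1 = 0\<close> by simp
    qed
    ultimately have c0: "c \<noteq> 0" unfolding cval using d0 by simp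
    have r: "heis_br p q = c *\<^sub>R z" unfolding br_eq c_def z_def ..
    define \<mu> where "\<mu> = c * c * \<gamma>"
    have mu0: "\<mu> > 0" unfolding \<mu>_def \<gamma>_def using c0 gpos by (auto simp add: zero_less_mult_iff)
    have pz: "g p z = 0" and qz: "g q z = 0" unfolding p_def q_def by (simp_all add: gs ez fz)
    have zp: "g z p = 0" and zq: "g z q = 0" using pz qz sy by metis+
    have v_pp: "g p p = 1" unfolding p_def by (simp add: gs ee ef fe ff)
    have v_qq: "g q q = -1" unfolding q_def by (simp add: gs ee ef fe ff)
    have v_pq: "g p q = 0" "g q p = 0" unfolding p_def q_def by (simp_all add: gs ee ef fe ff)
    have v_r: "g p (heis_br p q) = 0" "g (heis_br p q) p = 0" "g q (heis_br p q) = 0" "g (heis_br p q) q = 0"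
      unfolding r by (simp_all add: gs pz qz zp zq)
    have v_rr: "g (heis_br p q) (heis_br p q) = \<mu>" unfolding r \<mu>_def \<gamma>_def by (simp add: gs)
    have "kundt_equivalent heis_br H g (span {X1 + X2, X3}) (form1 \<mu>)"
    proof (rule equiv_from_psi[OF psi_aut])
      show "p$1*q$2 - p$2*q$1 \<noteq> 0" using c0 unfolding c_def .
      show "\<forall>x y. g (psi p q x) (psi p q y) = form1 \<mu> x y"
        by (simp add: psi_form[OF bl] v_pp v_pq v_qq v_r v_rr form1_def algebra_simps)
      have nf: "n$1 * f$1 + n$2 * f$2 = N / \<delta>"
      proof -
        have "n$1 * f$1 + n$2 * f$2 = (N - k * (n$1 * e$1 + n$2 * e$2)) / \<delta>"
          unfolding f1 f2 N_def using d0 by (simp add: field_simps)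
        then show ?thesis using ne by simp
      qed
      have np: "n$1 * p$1 + n$2 * p$2 = N / \<delta> / 2"
        unfolding p_def using ne nf by (simp add: algebra_simps)
      have nq: "n$1 * q$1 + n$2 * q$2 = - (N / \<delta> / 2)"
        unfolding q_def using ne nf by (simp add: algebra_simps)
      show "\<forall>x. psi p q x \<in> H \<longleftrightarrow> x \<in> span {X1 + X2, X3}"
      proof
        fix x
        have "psi p q x \<in> H \<longleftrightarrow> x$1 * (n$1 * p$1 + n$2 * p$2) + x$2 * (n$1 * q$1 + n$2 * q$2) = 0"
          unfolding Hc by (simp add: algebra_simps)
        also have "\<dots> \<longleftrightarrow> (x$1 - x$2) * (N / \<delta> / 2) = 0" unfolding np nq by (simp add: algebra_simps)
        also have "\<dots> \<longleftrightarrow> x$1 = x$2" using d0 Npos by simp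
        finally show "psi p q x \<in> H \<longleftrightarrow> x \<in> span {X1 + X2, X3}" unfolding span123 by simp
      qed
    qed
    then show ?thesis using mu0 by blast
  qed
  show ?thesis using caseA caseB by blast
qed

end
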